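(* Let $(H,+,\circ)$ be a commutative multiplicative hyperring with identity and let $P$ be a proper strong $\mathcal{C}$-hyperideal of $H$. Then $P$ is an sdf-absorbing hyperideal of $H$ if and only if the following holds: whenever $0\neq x,y\in H\setminus P$ satisfy $x\circ y\subseteq P$, there are no $0\neq a,b\in H$ with $a-b=x$ and $a+b=y$.
   Context: A commutative multiplicative hyperring $(H,+,\circ)$ consists of an abelian group $(H,+)$ and an associative, commutative hyperoperation $\circ: H\times H\to P^*(H)$ with $x\circ(y+z)\subseteq x\circ y+x\circ z$ and $x\circ(-y)=-(x\circ y)=(-x)\circ y$. For subsets $A,B$, $A\circ B=\bigcup_{a\in A,b\in B}a\circ b$, $A\pm B=\{a\pm b\}$; $x^2=x\circ x$. Identity: $x\in x\circ 1$ for all $x$. A hyperideal is a nonempty $P$ with $x-y\in P$ and $r\circ x\subseteq P$ for $x,y\in P$, $r\in H$. Let $\mathcal{C}=\{c_1\circ\cdots\circ c_n: c_i\in H,n\in\mathbb{N}\}$ and $\mathfrak{C}=\{\sum_{i=1}^n C_i: C_i\in\mathcal{C}\}$; $P$ is a strong $\mathcal{C}$-hyperideal if for every $D\in\mathfrak{C}$, $D\cap P\neq\varnothing$ implies $D\subseteq P$. A proper hyperideal $P$ is sdf-absorbing if whenever $0\neq x,y\in H$ and $x^2-y^2\subseteq P$, then $x-y\in P$ or $x+y\in P$. *)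

theory Defs
  imports Main
begin

text \<open>A hyperoperation on the carrier type 'a (whose additive structure (H,+) is the
abelian group given by the type class ab_group_add) is a map 'a => 'a => 'a set.\<close>

definition hset_mult :: "('a \<Rightarrow> 'a \<Rightarrow> 'a set) \<Rightarrow> 'a set \<Rightarrow> 'a set \<Rightarrow> 'a set" where
  "hset_mult m A B = (\<Union>a\<in>A. \<Union>b\<in>B. m a b)"

definition set_plus_h :: "'a::ab_group_add set \<Rightarrow> 'a set \<Rightarrow> 'a set" where
  "set_plus_h A B = {a + b | a b. a \<in> A \<and> b \<in> B}"

definition set_minus_h :: "'a::ab_group_add set \<Rightarrow> 'a set \<Rightarrow> 'a set" where
  "set_minus_h A B = {a - b | a b. a \<in> A \<and> b \<in> B}"

definition comm_mult_hyperring :: "('a::ab_group_add \<Rightarrow> 'a \<Rightarrow> 'a set) \<Rightarrow> bool" where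
  "comm_mult_hyperring m \<longleftrightarrow>
     (\<forall>x y. m x y \<noteq> {}) \<and>
     (\<forall>x y z. hset_mult m (m x y) {z} = hset_mult m {x} (m y z)) \<and>
     (\<forall>x y. m x y = m y x) \<and>
     (\<forall>x y z. m x (y + z) \<subseteq> set_plus_h (m x y) (m x z)) \<and>
     (\<forall>x y. m x (- y) = uminus ` (m x y) \<and> m (- x) y = uminus ` (m x y))"

definition hr_identity :: "('a \<Rightarrow> 'a \<Rightarrow> 'a set) \<Rightarrow> 'a \<Rightarrow> bool" where
  "hr_identity m e \<longleftrightarrow> (\<forall>x. x \<in> m x e)"

definition hyperideal :: "('a::ab_group_add \<Rightarrow> 'a \<Rightarrow> 'a set) \<Rightarrow> 'a set \<Rightarrow> bool" where
  "hyperideal m P \<longleftrightarrow> P \<noteq> {} \<and> (\<forall>x\<in>P. \<forall>y\<in>P. x - y \<in> P) \<and> (\<forall>r x. x \<in> P \<longrightarrow> m r x \<subseteq> P)"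

definition proper_hyperideal :: "('a::ab_group_add \<Rightarrow> 'a \<Rightarrow> 'a set) \<Rightarrow> 'a set \<Rightarrow> bool" where
  "proper_hyperideal m P \<longleftrightarrow> hyperideal m P \<and> P \<noteq> UNIV"

fun hprod :: "('a \<Rightarrow> 'a \<Rightarrow> 'a set) \<Rightarrow> 'a list \<Rightarrow> 'a set" where
  "hprod m [] = {}"
| "hprod m [c] = {c}"
| "hprod m (c # cs) = hset_mult m {c} (hprod m cs)"

definition classC :: "('a \<Rightarrow> 'a \<Rightarrow> 'a set) \<Rightarrow> 'a set set" where
  "classC m = {hprod m cs | cs. cs \<noteq> []}"

fun sum_sets :: "'a::ab_group_add set list \<Rightarrow> 'a set" where
  "sum_sets [] = {0}"
| "sum_sets [A] = A"
| "sum_sets (A # As) = set_plus_h A (sum_sets As)"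

definition classFC :: "('a::ab_group_add \<Rightarrow> 'a \<Rightarrow> 'a set) \<Rightarrow> 'a set set" where
  "classFC m = {sum_sets Cs | Cs. Cs \<noteq> [] \<and> set Cs \<subseteq> classC m}"

definition strong_C_hyperideal :: "('a::ab_group_add \<Rightarrow> 'a \<Rightarrow> 'a set) \<Rightarrow> 'a set \<Rightarrow> bool" where
  "strong_C_hyperideal m P \<longleftrightarrow> hyperideal m P \<and>
     (\<forall>D\<in>classFC m. D \<inter> P \<noteq> {} \<longrightarrow> D \<subseteq> P)"

definition sdf_absorbing :: "('a::ab_group_add \<Rightarrow> 'a \<Rightarrow> 'a set) \<Rightarrow> 'a set \<Rightarrow> bool" where
  "sdf_absorbing m P \<longleftrightarrow> proper_hyperideal m P \<and>
     (\<forall>x y. x \<noteq> 0 \<longrightarrow> y \<noteq> 0 \<longrightarrow> set_minus_h (m x x) (m y y) \<subseteq> P \<longrightarrow>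
        x - y \<in> P \<or> x + y \<in> P)"

end

theory Submission
  imports Defs
begin

definition DD :: "('a::ab_group_add \<Rightarrow> 'a \<Rightarrow> 'a set) \<Rightarrow> 'a \<Rightarrow> 'a \<Rightarrow> 'a set" where
  "DD m a b = sum_sets [m a a, m a (-b), m b a, m (-b) b]"

lemma hprod2: "hprod m [a, b] = m a b"
  by (simp add: hset_mult_def)

lemma DD_in: "DD m a b \<in> classFC m"
proof -
  have "\<And>c d. m c d \<in> classC m"
    unfolding classC_def by (metis (mono_tags, lifting) hprod2 list.distinct(1) mem_Collect_eq)
  then have "set [m a a, m a (-b), m b a, m (-b) b] \<subseteq> classC m" by simp
  then show ?thesis unfolding classFC_def DD_def by blast
qed

lemma DD_mem: "u \<in> m a a \<Longrightarrow> p \<in> m a (-b) \<Longrightarrow> q \<in> m b a \<Longrightarrow> r \<in> m (-b) b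
   \<Longrightarrow> u + (p + (q + r)) \<in> DD m a b"
proof -
  assume a: "u \<in> m a a" "p \<in> m a (-b)" "q \<in> m b a" "r \<in> m (-b) b"
  have "q + r \<in> set_plus_h (m b a) (m (-b) b)" using a unfolding set_plus_h_def by blast
  then have "p + (q + r) \<in> set_plus_h (m a (-b)) (set_plus_h (m b a) (m (-b) b))"
    using a unfolding set_plus_h_def by blast
  then have "u + (p + (q + r)) \<in> set_plus_h (m a a) (set_plus_h (m a (-b)) (set_plus_h (m b a) (m (-b) b)))"
    using a unfolding set_plus_h_def by blast
  then show ?thesis unfolding DD_def by simp
qed

lemma prod_in_DD:
  assumes H: "comm_mult_hyperring m" and e: "e \<in> m (a - b) (a + b)"
  shows "e \<in> DD m a b"
proof -
  from H have dist: "\<And>x y z. m x (y + z) \<subseteq> set_plus_h (m x y) (m x z)"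
    and com: "\<And>x y. m x y = m y x"
    and neg: "\<And>x y. m x (- y) = uminus ` (m x y) \<and> m (- x) y = uminus ` (m x y)"
    unfolding comm_mult_hyperring_def by blast+
  from e dist obtain p q where pq: "e = p + q" "p \<in> m (a - b) a" "q \<in> m (a-b) b"
    unfolding set_plus_h_def by blast
  have "m (a - b) a = m a (a + - b)" using com[of "a - b" a] by (simp only: diff_conv_add_uminus)
  then have "p \<in> m a (a + - b)" using pq by simp
  with dist obtain u1 u2 where u: "p = u1 + u2" "u1 \<in> m a a" "u2 \<in> m a (-b)"
    unfolding set_plus_h_def by blast
  have "m (a - b) b = m b (a + - b)" using com[of "a - b" b] by (simp only: diff_conv_add_uminus)
  then have "q \<in> m b (a + - b)" using pq by simp
  with dist obtain u3 u4 where v: "q = u3 + u4" "u3 \<in> m b a" "u4 \<in> m b (-b)"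
    unfolding set_plus_h_def by blast
  have "m b (-b) = m (-b) b" using neg by metis
  with v have "u4 \<in> m (-b) b" by simp
  from DD_mem[OF u(2) u(3) v(2) this] show ?thesis using pq u v by (simp add: add.assoc)
qed

lemma sq_in_DD:
  assumes H: "comm_mult_hyperring m" and u: "u \<in> m a a" and v: "v \<in> m b b"
  shows "u - v \<in> DD m a b"
proof -
  have ne0: "\<forall>x y. m x y \<noteq> {}" using H unfolding comm_mult_hyperring_def by (elim conjE) assumption
  have com0: "\<forall>x y. m x y = m y x" using H unfolding comm_mult_hyperring_def by (elim conjE) assumption
  have neg0: "\<forall>x y. m x (- y) = uminus ` (m x y) \<and> m (- x) y = uminus ` (m x y)"
    using H unfolding comm_mult_hyperring_def by (elim conjE) assumption
  have ne: "m a b \<noteq> {}" using ne0[rule_format, of a b] .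
  have com: "m b a = m a b" using com0[rule_format, of b a] .
  have n1: "m a (- b) = uminus ` (m a b)" using conjunct1[OF neg0[rule_format, of a b]] .
  have n2: "m (- b) b = uminus ` (m b b)" using conjunct2[OF neg0[rule_format, of b b]] .
  obtain w where w: "w \<in> m a b" using ne by blast
  have 1: "-w \<in> m a (-b)" unfolding n1 using w by (rule imageI)
  have 2: "w \<in> m b a" unfolding com by (rule w)
  have 3: "-v \<in> m (-b) b" unfolding n2 using v by (rule imageI)
  from DD_mem[OF u 1 2 3] show ?thesis by simp
qed

theorem mainTheorem4:
  fixes m :: "'a::ab_group_add \<Rightarrow> 'a \<Rightarrow> 'a set" and one :: 'a and P :: "'a set"
  assumes "comm_mult_hyperring m"
    and "hr_identity m one"
    and "proper_hyperideal m P"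
    and "strong_C_hyperideal m P"
  shows "sdf_absorbing m P \<longleftrightarrow>
    (\<forall>x y. x \<noteq> 0 \<longrightarrow> y \<noteq> 0 \<longrightarrow> x \<notin> P \<longrightarrow> y \<notin> P \<longrightarrow> m x y \<subseteq> P \<longrightarrow>
       \<not> (\<exists>a b. a \<noteq> 0 \<and> b \<noteq> 0 \<and> a - b = x \<and> a + b = y))"
proof -
  note H = assms(1)
  have strong: "\<And>D. D \<in> classFC m \<Longrightarrow> D \<inter> P \<noteq> {} \<Longrightarrow> D \<subseteq> P"
    using assms(4) unfolding strong_C_hyperideal_def by blast
  have ne0: "\<forall>x y. m x y \<noteq> {}" using H unfolding comm_mult_hyperring_def by (elim conjE) assumption
  have ne: "\<And>x y. m x y \<noteq> {}" using ne0 by blast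
  have zero: "0 \<in> P" using assms(3) unfolding proper_hyperideal_def hyperideal_def
  proof -
    from assms(3) obtain z where "z \<in> P" "\<forall>x\<in>P. \<forall>y\<in>P. x - y \<in> P"
      unfolding proper_hyperideal_def hyperideal_def by blast
    then have "z - z \<in> P" by blast
    then show ?thesis by simp
  qed
  show ?thesis
  proof
    assume S: "sdf_absorbing m P"
    show "\<forall>x y. x \<noteq> 0 \<longrightarrow> y \<noteq> 0 \<longrightarrow> x \<notin> P \<longrightarrow> y \<notin> P \<longrightarrow> m x y \<subseteq> P \<longrightarrow>
       \<not> (\<exists>a b. a \<noteq> 0 \<and> b \<noteq> 0 \<and> a - b = x \<and> a + b = y)"
    proof (intro allI impI notI)
      fix x y
      assume xP: "x \<notin> P" and yP: "y \<notin> P" and xy: "m x y \<subseteq> P"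
        and ex: "\<exists>a b. a \<noteq> 0 \<and> b \<noteq> 0 \<and> a - b = x \<and> a + b = y"
      then obtain a b where ab: "a \<noteq> 0" "b \<noteq> 0" "a - b = x" "a + b = y" by blast
      obtain e where "e \<in> m x y" using ne by blast
      then have e1: "e \<in> m (a - b) (a + b)" "e \<in> P" using ab xy by auto
      then have "e \<in> DD m a b" "e \<in> P" using prod_in_DD[OF H e1(1)] by auto
      then have DP: "DD m a b \<subseteq> P" using strong[OF DD_in] by blast
      have "set_minus_h (m a a) (m b b) \<subseteq> P"
        unfolding set_minus_h_def using sq_in_DD[OF H] DP by blast
      then have "a - b \<in> P \<or> a + b \<in> P" using S ab unfolding sdf_absorbing_def by blast
      then show False using ab xP yP by blast
    qed
  next
    assume C: "\<forall>x y. x \<noteq> 0 \<longrightarrow> y \<noteq> 0 \<longrightarrow> x \<notin> P \<longrightarrow> y \<notin> P \<longrightarrow> m x y \<subseteq> P \<longrightarrow>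
       \<not> (\<exists>a b. a \<noteq> 0 \<and> b \<noteq> 0 \<and> a - b = x \<and> a + b = y)"
    show "sdf_absorbing m P"
      unfolding sdf_absorbing_def
    proof (intro conjI allI impI assms(3))
      fix x y :: 'a
      assume x0: "x \<noteq> 0" and y0: "y \<noteq> 0" and sq: "set_minus_h (m x x) (m y y) \<subseteq> P"
      show "x - y \<in> P \<or> x + y \<in> P"
      proof (rule ccontr)
        assume nn: "\<not> (x - y \<in> P \<or> x + y \<in> P)"
        obtain u v where uv: "u \<in> m x x" "v \<in> m y y" using ne by blast
        have "u - v \<in> P" using sq uv unfolding set_minus_h_def by blast
        moreover have "u - v \<in> DD m x y" using sq_in_DD[OF H uv] .
        ultimately have DP: "DD m x y \<subseteq> P" using strong[OF DD_in] by blast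
        have "m (x - y) (x + y) \<subseteq> P" using prod_in_DD[OF H] DP by blast
        moreover have "x - y \<noteq> 0" "x + y \<noteq> 0" using nn zero by auto
        ultimately have "\<not> (\<exists>a b. a \<noteq> 0 \<and> b \<noteq> 0 \<and> a - b = x - y \<and> a + b = x + y)"
          using C nn by blast
        then show False using x0 y0 by blast
      qed
    qed
  qed
qed

end
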